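(* There exists an instance of the brand-effects model in which the total expected welfare of the greedy allocation is strictly smaller than the total expected welfare (evaluated in the brand-effects model) of the allocation selected by the standard model without brand effects, i.e., the allocation that places ads in positions $1,\dots,s$ in decreasing order of their eCPM bids $b_i q_i$.
   Context: Brand-effects model: there are $s$ positions and a set of advertisers, each either a brand advertiser or a non-brand advertiser; advertiser $i$ has quality score $q_i \ge 0$ and bid $b_i \ge 0$, and its eCPM bid is $b_i q_i$. Each position $k$ has two quality scores $\beta_k$ and $\eta_k$, both non-increasing in $k$, normalized so $\beta_1=\eta_1=1$. A brand (resp. non-brand) advertiser with quality $q$ shown in position $k$ is clicked with probability $\beta_k q$ (resp. $\eta_k q$). An allocation places distinct advertisers in the positions; its total expected welfare is $\sum_j b_{(j)} p_{(j)}$, where $b_{(j)}$ and $p_{(j)}$ are the bid and click probability of the ad in position $j$. The normalized eCPM of advertiser $i$ for position $k$ is $\beta_k b_i q_i$ for a brand advertiser and $\eta_k b_i q_i$ for a non-brand advertiser. The greedy allocation is defined by, for $k=1,\dots,s$ in order, placing in position $k$ the not-yet-placed ad with the highest normalized eCPM for position $k$. *)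

theory Defs
  imports Main "HOL.Real"
begin

text \<open>Advertisers are indexed by 0..<n; positions by 1..s.
  brand i: advertiser i is a brand advertiser; q i: quality; b i: bid;
  beta k, eta k: position quality scores.\<close>

definition valid_instance ::
  "nat \<Rightarrow> nat \<Rightarrow> (nat \<Rightarrow> bool) \<Rightarrow> (nat \<Rightarrow> real) \<Rightarrow> (nat \<Rightarrow> real)
   \<Rightarrow> (nat \<Rightarrow> real) \<Rightarrow> (nat \<Rightarrow> real) \<Rightarrow> bool" where
  "valid_instance s n brand q b beta eta \<longleftrightarrow>
     1 \<le> s \<and> s \<le> n \<and>
     (\<forall>i<n. 0 \<le> q i \<and> 0 \<le> b i) \<and>
     beta 1 = 1 \<and> eta 1 = 1 \<and>
     (\<forall>k\<in>{1..s}. 0 \<le> beta k \<and> 0 \<le> eta k) \<and>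
     (\<forall>k\<in>{1..s}. \<forall>l\<in>{1..s}. k \<le> l \<longrightarrow> beta l \<le> beta k \<and> eta l \<le> eta k)"

definition is_allocation :: "nat \<Rightarrow> nat \<Rightarrow> (nat \<Rightarrow> nat) \<Rightarrow> bool" where
  "is_allocation s n a \<longleftrightarrow> inj_on a {1..s} \<and> a ` {1..s} \<subseteq> {..<n}"

definition click_prob ::
  "(nat \<Rightarrow> bool) \<Rightarrow> (nat \<Rightarrow> real) \<Rightarrow> (nat \<Rightarrow> real) \<Rightarrow> (nat \<Rightarrow> real)
   \<Rightarrow> nat \<Rightarrow> nat \<Rightarrow> real" where
  "click_prob brand q beta eta i k = (if brand i then beta k else eta k) * q i"

definition welfare ::
  "nat \<Rightarrow> (nat \<Rightarrow> bool) \<Rightarrow> (nat \<Rightarrow> real) \<Rightarrow> (nat \<Rightarrow> real) \<Rightarrow> (nat \<Rightarrow> real)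
   \<Rightarrow> (nat \<Rightarrow> real) \<Rightarrow> (nat \<Rightarrow> nat) \<Rightarrow> real" where
  "welfare s brand q b beta eta a = (\<Sum>k=1..s. b (a k) * click_prob brand q beta eta (a k) k)"

definition norm_ecpm ::
  "(nat \<Rightarrow> bool) \<Rightarrow> (nat \<Rightarrow> real) \<Rightarrow> (nat \<Rightarrow> real) \<Rightarrow> (nat \<Rightarrow> real)
   \<Rightarrow> (nat \<Rightarrow> real) \<Rightarrow> nat \<Rightarrow> nat \<Rightarrow> real" where
  "norm_ecpm brand q b beta eta i k = (if brand i then beta k else eta k) * b i * q i"

definition is_greedy ::
  "nat \<Rightarrow> nat \<Rightarrow> (nat \<Rightarrow> bool) \<Rightarrow> (nat \<Rightarrow> real) \<Rightarrow> (nat \<Rightarrow> real) \<Rightarrow> (nat \<Rightarrow> real)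
   \<Rightarrow> (nat \<Rightarrow> real) \<Rightarrow> (nat \<Rightarrow> nat) \<Rightarrow> bool" where
  "is_greedy s n brand q b beta eta a \<longleftrightarrow> is_allocation s n a \<and>
     (\<forall>k\<in>{1..s}. \<forall>i<n. i \<notin> a ` {1..<k} \<longrightarrow>
        norm_ecpm brand q b beta eta i k \<le> norm_ecpm brand q b beta eta (a k) k)"

definition is_standard ::
  "nat \<Rightarrow> nat \<Rightarrow> (nat \<Rightarrow> real) \<Rightarrow> (nat \<Rightarrow> real) \<Rightarrow> (nat \<Rightarrow> nat) \<Rightarrow> bool" where
  "is_standard s n q b a \<longleftrightarrow> is_allocation s n a \<and>
     (\<forall>k\<in>{1..s}. \<forall>i<n. i \<notin> a ` {1..<k} \<longrightarrow> b i * q i \<le> b (a k) * q (a k))"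

end

theory Submission
  imports Defs
begin

definition "bb (i::nat) = (if i = 0 then 10 else if i = 1 then 9 else (8::real))"
definition "br (i::nat) = (i \<le> 1)"
definition "bt (k::nat) = (if k \<le> 1 then 1 else if k = 2 then 4/5 else (0::real))"

lemma s3: "{1..3::nat} = {1,2,3}" by auto
lemma lk: "{1..<1::nat} = {}" "{1..<2::nat} = {1}" "{1..<3::nat} = {1,2}" by auto

lemma ex3: "(i::nat) < 3 \<Longrightarrow> i = 0 \<or> i = 1 \<or> i = 2" by auto

lemma greedy_u:
  assumes "is_greedy 3 3 br (\<lambda>_. 1) bb bt (\<lambda>_. 1) g"
  shows "g 1 = 0 \<and> g 2 = 2 \<and> g 3 = 1"
proof -
  have al: "inj_on g {1..3}" "g ` {1..3} \<subseteq> {..<3}"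
    using assms by (auto simp: is_greedy_def is_allocation_def)
  have r: "\<And>k i. k \<in> {1..3} \<Longrightarrow> i < 3 \<Longrightarrow> i \<notin> g ` {1..<k} \<Longrightarrow>
     norm_ecpm br (\<lambda>_. 1) bb bt (\<lambda>_. 1) i k \<le> norm_ecpm br (\<lambda>_. 1) bb bt (\<lambda>_. 1) (g k) k"
    using assms by (auto simp: is_greedy_def)
  have lt: "g 1 < 3" "g 2 < 3" "g 3 < 3" using al(2) unfolding s3 by auto
  have d: "g 1 \<noteq> g 2" "g 1 \<noteq> g 3" "g 2 \<noteq> g 3"
    using al(1) unfolding inj_on_def s3 by (metis insertCI numeral_eq_iff one_eq_numeral_iff semiring_norm(83) semiring_norm(86) semiring_norm(89))+
  have "g 1 = 0"
    using r[of 1 0] ex3[OF lt(1)] by (auto simp: norm_ecpm_def bb_def br_def bt_def)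
  moreover have "g 2 = 2"
  proof -
    have "{1..<2::nat} = {1}" by auto
    then have "norm_ecpm br (\<lambda>_. 1) bb bt (\<lambda>_. 1) 2 2 \<le> norm_ecpm br (\<lambda>_. 1) bb bt (\<lambda>_. 1) (g 2) 2"
      using r[of 2 2] \<open>g 1 = 0\<close> by auto
    then show ?thesis using ex3[OF lt(2)] d \<open>g 1 = 0\<close>
      by (auto simp: norm_ecpm_def bb_def br_def bt_def)
  qed
  moreover have "g 3 = 1" using ex3[OF lt(3)] d calculation by auto
  ultimately show ?thesis by auto
qed

lemma std_u:
  assumes "is_standard 3 3 (\<lambda>_. 1) bb a"
  shows "a 1 = 0 \<and> a 2 = 1 \<and> a 3 = 2"
proof -
  have al: "inj_on a {1..3}" "a ` {1..3} \<subseteq> {..<3}"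
    using assms by (auto simp: is_standard_def is_allocation_def)
  have r: "\<And>k i. k \<in> {1..3} \<Longrightarrow> i < 3 \<Longrightarrow> i \<notin> a ` {1..<k} \<Longrightarrow>
     bb i * 1 \<le> bb (a k) * 1"
    using assms by (auto simp: is_standard_def)
  have lt: "a 1 < 3" "a 2 < 3" "a 3 < 3" using al(2) unfolding s3 by auto
  have d: "a 1 \<noteq> a 2" "a 1 \<noteq> a 3" "a 2 \<noteq> a 3"
    using al(1) unfolding inj_on_def s3 by (metis insertCI numeral_eq_iff one_eq_numeral_iff semiring_norm(83) semiring_norm(86) semiring_norm(89))+
  have "a 1 = 0"
    using r[of 1 0] ex3[OF lt(1)] by (auto simp: bb_def)
  moreover have "a 2 = 1"
  proof -
    have "{1..<2::nat} = {1}" by auto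
    then have "bb 1 * 1 \<le> bb (a 2) * 1"
      using r[of 2 1] \<open>a 1 = 0\<close> by auto
    then show ?thesis using ex3[OF lt(2)] d \<open>a 1 = 0\<close>
      by (auto simp: bb_def)
  qed
  moreover have "a 3 = 2" using ex3[OF lt(3)] d calculation by auto
  ultimately show ?thesis by auto
qed


theorem theorem7:
  shows "\<exists>s n brand q b beta eta.
           valid_instance s n brand q b beta eta \<and>
           (\<exists>g. is_greedy s n brand q b beta eta g) \<and>
           (\<exists>a. is_standard s n q b a) \<and>
           (\<forall>g a. is_greedy s n brand q b beta eta g \<longrightarrow> is_standard s n q b a \<longrightarrow>
              welfare s brand q b beta eta g < welfare s brand q b beta eta a)"
proof (intro exI conjI allI impI)
  show "valid_instance 3 3 br (\<lambda>_. 1) bb bt (\<lambda>_. 1)"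
    unfolding valid_instance_def bb_def bt_def by auto
  define g0 where "g0 = (\<lambda>k::nat. if k \<le> 1 then 0 else if k = 2 then 2 else (1::nat))"
  show "is_greedy 3 3 br (\<lambda>_. 1) bb bt (\<lambda>_. 1) g0"
    unfolding is_greedy_def is_allocation_def s3 ball_simps lk
    by (auto simp: lk g0_def inj_on_def norm_ecpm_def bb_def br_def bt_def dest!: ex3)
  define a0 where "a0 = (\<lambda>k::nat. if k \<le> 1 then 0 else if k = 2 then 1 else (2::nat))"
  show "is_standard 3 3 (\<lambda>_. 1) bb a0"
    unfolding is_standard_def is_allocation_def s3 ball_simps lk
    by (auto simp: lk a0_def inj_on_def bb_def dest!: ex3)
  fix g a
  assume "is_greedy 3 3 br (\<lambda>_. 1) bb bt (\<lambda>_. 1) g" "is_standard 3 3 (\<lambda>_. 1) bb a"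
  then have "g 1 = 0 \<and> g 2 = 2 \<and> g 3 = 1" "a 1 = 0 \<and> a 2 = 1 \<and> a 3 = 2"
    using greedy_u std_u by blast+
  then show "welfare 3 br (\<lambda>_. 1) bb bt (\<lambda>_. 1) g < welfare 3 br (\<lambda>_. 1) bb bt (\<lambda>_. 1) a"
    unfolding welfare_def s3 by (simp add: click_prob_def bb_def br_def bt_def)
qed

end
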